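(* Let $n\ge2$ and let $P$ be a $2n$-gon in the plane whose sides are alternately horizontal and vertical (axis aligned), in general enough position that $T(P)$ is defined. Then $T(P)$ is again axis aligned; more precisely, if the $k$-th side of $P$ is vertical (resp. horizontal) then the $k$-th side of $T(P)$ is horizontal (resp. vertical).
   Context: For a polygon with vertices $V_1,\dots,V_m$ (indices mod $m$) in $\mathbb{RP}^2$, the $k$-th side is $V_kV_{k+1}$, and its projective normal $n_k$ is the line through the point $(V_{k-1}V_{k+1})\cap(V_kV_{k+2})$ and the point $(V_{k-1}V_k)\cap(V_{k+1}V_{k+2})$. $T(P)$ is the polygon whose vertices are $n_1\cap n_2, n_2\cap n_3,\dots$, so that its $k$-th side lies on the line $n_k$. Parallel lines are regarded as meeting at the corresponding point at infinity. *)

theory Defs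
  imports "HOL-Analysis.Analysis" "HOL-Analysis.Cross3"
begin

text \<open>Projective plane RP^2 via homogeneous coordinates in real^3 (nonzero vectors up to
scale). Both points and lines are homogeneous vectors; the line through two points and the
intersection point of two lines are both given by the cross product (a zero result means
"undefined"). Parallel lines meet at a point at infinity (third coordinate 0).\<close>

definition hom :: "real \<times> real \<Rightarrow> real^3" where
  "hom p = vector [fst p, snd p, 1]"

definition pjoin :: "real^3 \<Rightarrow> real^3 \<Rightarrow> real^3" where
  "pjoin p q = cross3 p q"

definition pmeet :: "real^3 \<Rightarrow> real^3 \<Rightarrow> real^3" where
  "pmeet l l' = cross3 l l'"

definition vtx :: "(nat \<Rightarrow> real \<times> real) \<Rightarrow> nat \<Rightarrow> nat \<Rightarrow> real^3" where
  "vtx V m k = hom (V (k mod m))"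

definition diag_point :: "(nat \<Rightarrow> real \<times> real) \<Rightarrow> nat \<Rightarrow> nat \<Rightarrow> real^3" where
  "diag_point V m k =
     pmeet (pjoin (vtx V m (k + m - 1)) (vtx V m (k + 1)))
           (pjoin (vtx V m k) (vtx V m (k + 2)))"

definition side_point :: "(nat \<Rightarrow> real \<times> real) \<Rightarrow> nat \<Rightarrow> nat \<Rightarrow> real^3" where
  "side_point V m k =
     pmeet (pjoin (vtx V m (k + m - 1)) (vtx V m k))
           (pjoin (vtx V m (k + 1)) (vtx V m (k + 2)))"

definition proj_normal :: "(nat \<Rightarrow> real \<times> real) \<Rightarrow> nat \<Rightarrow> nat \<Rightarrow> real^3" where
  "proj_normal V m k = pjoin (diag_point V m k) (side_point V m k)"

text \<open>Vertex of T(P) between its sides k and k+1: n_k \<inter> n_{k+1}.\<close>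

definition T_vertex :: "(nat \<Rightarrow> real \<times> real) \<Rightarrow> nat \<Rightarrow> nat \<Rightarrow> real^3" where
  "T_vertex V m k = pmeet (proj_normal V m (k mod m)) (proj_normal V m ((k + 1) mod m))"

text \<open>T(P) is defined (as a polygon in the plane): all lines and points in the construction
exist (the cross products are nonzero) and the vertices of T(P) are finite points.\<close>

definition T_defined :: "(nat \<Rightarrow> real \<times> real) \<Rightarrow> nat \<Rightarrow> bool" where
  "T_defined V m \<longleftrightarrow> (\<forall>k<m.
      pjoin (vtx V m (k + m - 1)) (vtx V m (k + 1)) \<noteq> 0 \<and>
      pjoin (vtx V m k) (vtx V m (k + 2)) \<noteq> 0 \<and>
      pjoin (vtx V m (k + m - 1)) (vtx V m k) \<noteq> 0 \<and>
      pjoin (vtx V m (k + 1)) (vtx V m (k + 2)) \<noteq> 0 \<and>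
      diag_point V m k \<noteq> 0 \<and> side_point V m k \<noteq> 0 \<and>
      proj_normal V m k \<noteq> 0 \<and>
      T_vertex V m k $ 3 \<noteq> 0)"

definition horiz_side :: "(nat \<Rightarrow> real \<times> real) \<Rightarrow> nat \<Rightarrow> nat \<Rightarrow> bool" where
  "horiz_side V m k \<longleftrightarrow> snd (V (k mod m)) = snd (V ((k + 1) mod m))"

definition vert_side :: "(nat \<Rightarrow> real \<times> real) \<Rightarrow> nat \<Rightarrow> nat \<Rightarrow> bool" where
  "vert_side V m k \<longleftrightarrow> fst (V (k mod m)) = fst (V ((k + 1) mod m))"

text \<open>A projective line a x + b y + c z = 0 (homogeneous coordinates (a,b,c)) is a horizontal
affine line iff a = 0 and b \<noteq> 0; a vertical affine line iff b = 0 and a \<noteq> 0.\<close>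

definition horizontal_line :: "real^3 \<Rightarrow> bool" where
  "horizontal_line l \<longleftrightarrow> l $ 1 = 0 \<and> l $ 2 \<noteq> 0"

definition vertical_line :: "real^3 \<Rightarrow> bool" where
  "vertical_line l \<longleftrightarrow> l $ 2 = 0 \<and> l $ 1 \<noteq> 0"

end

theory Submission
  imports Defs
begin

lemma nrm1: "snd A = snd B \<Longrightarrow> fst B = fst C \<Longrightarrow> snd C = snd D \<Longrightarrow> (cross3 (cross3 (cross3 (hom A) (hom C)) (cross3 (hom B) (hom D))) (cross3 (cross3 (hom A) (hom B)) (cross3 (hom C) (hom D)))) $ 1 = 0"
  by (cases A; cases B; cases C; cases D) (simp add: cross3_def hom_def vector_3)
lemma nrm2: "fst A = fst B \<Longrightarrow> snd B = snd C \<Longrightarrow> fst C = fst D \<Longrightarrow> (cross3 (cross3 (cross3 (hom A) (hom C)) (cross3 (hom B) (hom D))) (cross3 (cross3 (hom A) (hom B)) (cross3 (hom C) (hom D)))) $ 2 = 0"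
  by (cases A; cases B; cases C; cases D) (simp add: cross3_def hom_def vector_3)

theorem mainTheorem11:
  fixes V :: "nat \<Rightarrow> real \<times> real" and n :: nat
  assumes "n \<ge> 2"
    and "\<forall>k<2*n. V k \<noteq> V ((k + 1) mod (2*n))"
    and "\<forall>k<2*n. (horiz_side V (2*n) k \<and> vert_side V (2*n) (k + 1))
                 \<or> (vert_side V (2*n) k \<and> horiz_side V (2*n) (k + 1))"
    and "T_defined V (2*n)"
  shows "\<forall>k<2*n. (vert_side V (2*n) k \<longrightarrow> horizontal_line (proj_normal V (2*n) k))
               \<and> (horiz_side V (2*n) k \<longrightarrow> vertical_line (proj_normal V (2*n) k))"
proof (intro allI impI conjI)
  define m where "m = 2*n"
  have m1: "m \<ge> 1" using assms(1) by (simp add: m_def)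
  have hs_mod: "horiz_side V m i = horiz_side V m (i mod m)" for i
    by (simp add: horiz_side_def mod_Suc_eq)
  have vs_mod: "vert_side V m i = vert_side V m (i mod m)" for i
    by (simp add: vert_side_def mod_Suc_eq)
  fix k assume k: "k < 2*n"
  hence km: "k < m" by (simp add: m_def)
  define j where "j = (k + m - 1) mod m"
  have jm: "j < m" using m1 by (simp add: j_def)
  have j1: "(j + 1) mod m = k"
  proof -
    have "(j + 1) mod m = Suc (k+m-1) mod m" unfolding j_def by (metis Suc_eq_plus1 mod_Suc_eq)
    also have "Suc (k+m-1) = k + m" using m1 by simp
    finally show ?thesis using km by simp
  qed
  have j2: "(j + 2) mod m = (k+1) mod m"
    by (metis j1 mod_Suc_eq Suc_eq_plus1 add_2_eq_Suc')
  have H2: "\<forall>i<m. V i \<noteq> V ((i + 1) mod m)" using assms(2) by (simp add: m_def)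
  have H3: "\<forall>i<m. (horiz_side V m i \<and> vert_side V m (i + 1)) \<or> (vert_side V m i \<and> horiz_side V m (i + 1))"
    using assms(3) by (simp add: m_def)
  have TD: "T_defined V m" using assms(4) by (simp add: m_def)
  have notboth: "\<not> (horiz_side V m i \<and> vert_side V m i)" if "i < m" for i
    using H2 that by (auto simp: horiz_side_def vert_side_def prod_eq_iff)
  have sj1: "horiz_side V m (j+1) = horiz_side V m k" "vert_side V m (j+1) = vert_side V m k"
    using hs_mod[of "j+1"] vs_mod[of "j+1"] j1 by auto
  have pn': "proj_normal V m k = cross3 (cross3 (cross3 (hom (V j)) (hom (V ((k+1) mod m)))) (cross3 (hom (V k)) (hom (V ((k+2) mod m)))))
      (cross3 (cross3 (hom (V j)) (hom (V k))) (cross3 (hom (V ((k+1) mod m))) (hom (V ((k+2) mod m)))))"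
    using km unfolding proj_normal_def diag_point_def side_point_def pjoin_def pmeet_def vtx_def j_def
    by simp
  have T3: "T_vertex V m k $ 3 \<noteq> 0" using TD km unfolding T_defined_def by blast
  hence nz: "proj_normal V m k $ 1 \<noteq> 0 \<or> proj_normal V m k $ 2 \<noteq> 0"
    using km by (auto simp: T_vertex_def pmeet_def cross3_def vector_3)
  {
    assume vk: "vert_side V m k"
    hence "horiz_side V m j" using H3 jm sj1 notboth[OF km] by auto
    hence a: "snd (V j) = snd (V k)" using jm j1 by (simp add: horiz_side_def)
    have b: "fst (V k) = fst (V ((k+1) mod m))" using vk km by (simp add: vert_side_def)
    have "horiz_side V m (k+1)" using H3 km vk notboth[OF km] by auto
    hence c: "snd (V ((k+1) mod m)) = snd (V ((k+2) mod m))"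
      by (simp add: horiz_side_def mod_Suc_eq)
    have "proj_normal V m k $ 1 = 0" unfolding pn' by (rule nrm1[OF a b c])
    with nz have "horizontal_line (proj_normal V m k)" by (simp add: horizontal_line_def)
  }
  note r1 = this
  {
    assume vk: "horiz_side V m k"
    hence "vert_side V m j" using H3 jm sj1 notboth[OF km] by auto
    hence a: "fst (V j) = fst (V k)" using jm j1 by (simp add: vert_side_def)
    have b: "snd (V k) = snd (V ((k+1) mod m))" using vk km by (simp add: horiz_side_def)
    have "vert_side V m (k+1)" using H3 km vk notboth[OF km] by auto
    hence c: "fst (V ((k+1) mod m)) = fst (V ((k+2) mod m))"
      by (simp add: vert_side_def mod_Suc_eq)
    have "proj_normal V m k $ 2 = 0" unfolding pn' by (rule nrm2[OF a b c])
    with nz have "vertical_line (proj_normal V m k)" by (simp add: vertical_line_def)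
  }
  note r2 = this
  show "vert_side V (2*n) k \<Longrightarrow> horizontal_line (proj_normal V (2*n) k)" using r1 by (simp add: m_def)
  show "horiz_side V (2*n) k \<Longrightarrow> vertical_line (proj_normal V (2*n) k)" using r2 by (simp add: m_def)
qed

end
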